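(* Let $M\in\mathfrak{R}H^\infty_{m\times k}$ and $N\in\mathfrak{R}H^\infty_{m\times\ell}$ be given by stable realizations \[ M(z)=D_M+zC(I_n-zA)^{-1}B_M,\qquad N(z)=D_N+zC(I_n-zA)^{-1}B_N, \] with $A$ a stable $n\times n$ matrix, let $W_{obs}$ be the observability operator of $\{C,A\}$, and put $Y=W_{obs}^*W_{obs}$. If $M(\lambda)M(z)^*=N(\lambda)N(z)^*$ for all $z,\lambda\in\mathbb{D}$, then the $k\times\ell$ matrix \[ U=(D_M^*D_M+B_M^*YB_M)^+(D_M^*D_N+B_M^*YB_N) \] is a partial isometry and $M(z)U=N(z)$ for all $z\in\mathbb{D}$.
   Context: $\mathbb{D}$ is the open unit disc; a stable matrix has all eigenvalues in $\mathbb{D}$. $\mathfrak{R}H^\infty_{k\times l}$: $k\times l$ rational matrix functions without poles in the closed unit disc. $W_{obs}=\operatorname{col}(CA^j)_{j\ge0}:\mathbb{C}^n\to\ell^2_+(\mathbb{C}^m)$, so $Y=\sum_{\nu\ge0}(A^* )^\nu C^*CA^\nu$. ${}^+$ denotes the Moore--Penrose generalized inverse. *)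

theory Defs
  imports "HOL-Analysis.Analysis"
begin

definition cadj :: "complex^'n^'m \<Rightarrow> complex^'m^'n" where
  "cadj A = (\<chi> i j. cnj (A $ j $ i))"

fun mpow :: "complex^'n^'n \<Rightarrow> nat \<Rightarrow> complex^'n^'n" where
  "mpow A 0 = mat 1"
| "mpow A (Suc k) = A ** mpow A k"

definition stable :: "complex^'n^'n \<Rightarrow> bool" where
  "stable A \<longleftrightarrow> (\<forall>c v. v \<noteq> 0 \<and> A *v v = c *s v \<longrightarrow> cmod c < 1)"

text \<open>Observability Gramian Y = W_obs^* W_obs = sum_nu (A^*)^nu C^* C A^nu.\<close>
definition obs_gramian :: "complex^'n^'m \<Rightarrow> complex^'n^'n \<Rightarrow> complex^'n^'n" where
  "obs_gramian C A = (\<Sum>\<nu>. mpow (cadj A) \<nu> ** cadj C ** C ** mpow A \<nu>)"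

definition transfer :: "complex^'k^'m \<Rightarrow> complex^'n^'m \<Rightarrow> complex^'n^'n \<Rightarrow> complex^'k^'n
    \<Rightarrow> complex \<Rightarrow> complex^'k^'m" where
  "transfer D C A B z = D + mat z ** C ** matrix_inv (mat 1 - mat z ** A) ** B"

definition mp_inverse :: "complex^'n^'m \<Rightarrow> complex^'m^'n" where
  "mp_inverse A = (THE X. A ** X ** A = A \<and> X ** A ** X = X \<and>
       cadj (A ** X) = A ** X \<and> cadj (X ** A) = X ** A)"

definition cinner :: "complex^'n \<Rightarrow> complex^'n \<Rightarrow> complex" where
  "cinner x y = (\<Sum>i\<in>UNIV. x $ i * cnj (y $ i))"

definition partial_isometry :: "complex^'k^'m \<Rightarrow> bool" where
  "partial_isometry U \<longleftrightarrow>
     (\<forall>x. (\<forall>y. U *v y = 0 \<longrightarrow> cinner x y = 0) \<longrightarrow> norm (U *v x) = norm x)"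

end

theory Submission
  imports Defs "Jordan_Normal_Form.Jordan_Normal_Form_Existence" "Jordan_Normal_Form.Spectral_Radius"
    "HOL-Complex_Analysis.Cauchy_Integral_Formula"
begin

no_notation Matrix.vec_index (infixl "$" 100)
no_notation Matrix.scalar_prod (infix "\<bullet>" 70)
hide_const (open) Matrix.mat Matrix.vec Matrix.row Matrix.col Matrix.orthogonal
hide_fact (open) Matrix.vec_eq_iff Matrix.mat_def

lemma cvec_eqI: "(\<And>i. x $ i = y $ i) \<Longrightarrow> x = y"
  by (simp add: vec_eq_iff)

lemma jnf_pow_decay:
  fixes B :: "complex Matrix.mat"
  assumes B: "B \<in> carrier_mat n n"
    and ev: "\<And>c. eigenvalue B c \<Longrightarrow> cmod c < 1"
  shows "\<exists>K r. 0 < r \<and> r < 1 \<and> (\<forall>k i j. i < n \<longrightarrow> j < n \<longrightarrow> cmod ((B ^\<^sub>m k) $$ (i,j)) \<le> K * r^k)"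
proof -
  define \<rho> where "\<rho> = Max (insert 0 (cmod ` spectrum B))"
  have fin: "finite (insert 0 (cmod ` spectrum B))" using card_finite_spectrum[OF B] by auto
  have rho_ge: "cmod c \<le> \<rho>" if "eigenvalue B c" for c
    unfolding \<rho>_def using fin that by (intro Max_ge) (auto simp: spectrum_def)
  have rho0: "0 \<le> \<rho>" unfolding \<rho>_def using fin by (intro Max_ge) auto
  have rho1: "\<rho> < 1" unfolding \<rho>_def using fin
    by (subst Max_less_iff) (auto simp: spectrum_def ev)
  define r where "r = (1 + \<rho>) / 2"
  have r0: "0 < r" and r1: "r < 1" and rr: "\<rho> < r" using rho0 rho1 by (auto simp: r_def)
  define B' where "B' = (complex_of_real (1/r)) \<cdot>\<^sub>m B"
  have B': "B' \<in> carrier_mat n n" using B by (simp add: B'_def)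
  have BB': "B = complex_of_real r \<cdot>\<^sub>m B'"
    unfolding B'_def using r0 B by (intro eq_matI) auto
  obtain bs where cB': "char_poly B' = (\<Prod>a\<leftarrow>bs. [:- a, 1:])"
    using char_poly_factorized[OF B'] by auto
  have bs_lt: "norm b < 1" if "b \<in> set bs" for b
  proof -
    have "poly (char_poly B') b = 0" using linear_poly_root[OF that] cB' by simp
    hence "b \<in> spectrum B'" using spectrum_root_char_poly[OF B'] by auto
    then obtain v where v: "v \<in> carrier_vec n" "v \<noteq> 0\<^sub>v n" "B' *\<^sub>v v = b \<cdot>\<^sub>v v"
      unfolding spectrum_def eigenvalue_def eigenvector_def using B' by auto
    have "B *\<^sub>v v = complex_of_real r \<cdot>\<^sub>v (B' *\<^sub>v v)"
      unfolding BB' using v(1) B' by (intro eq_vecI) (auto simp: scalar_prod_def sum_distrib_left ac_simps)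
    hence "B *\<^sub>v v = (complex_of_real r * b) \<cdot>\<^sub>v v" using v(3) by (simp add: smult_smult_assoc)
    hence "eigenvalue B (complex_of_real r * b)"
      unfolding eigenvalue_def eigenvector_def using v B by auto
    hence "cmod (complex_of_real r * b) \<le> \<rho>" by (rule rho_ge)
    hence "r * cmod b \<le> \<rho>" using r0 by (simp add: norm_mult)
    hence "r * cmod b < r * 1" using rr by simp
    thus ?thesis using r0 by (simp add: mult_less_cancel_left_pos)
  qed
  obtain c1 c2 where bnd: "\<And>k. norm_bound (B' ^\<^sub>m k) (c1 + c2 * of_nat k ^ (0 - 1))"
    using factored_char_poly_norm_bound_cof[OF B' cB', of 0] bs_lt by force
  have pw: "B ^\<^sub>m k = (complex_of_real r ^ k) \<cdot>\<^sub>m (B' ^\<^sub>m k)" for k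
  proof (induct k)
    case 0 show ?case using B' BB' by (intro eq_matI) auto
  next
    case (Suc k)
    have "B ^\<^sub>m Suc k = (complex_of_real r ^ k \<cdot>\<^sub>m B' ^\<^sub>m k) * (complex_of_real r \<cdot>\<^sub>m B')"
      using Suc BB' by simp
    also have "\<dots> = (complex_of_real r ^ Suc k) \<cdot>\<^sub>m (B' ^\<^sub>m k * B')"
      using B' by (intro eq_matI) (auto simp: scalar_prod_def sum_distrib_left ac_simps)
    finally show ?case by simp
  qed
  show ?thesis
  proof (rule exI[of _ "c1 + c2"], rule exI[of _ r], intro conjI r0 r1 allI impI)
    fix k i j assume ij: "i < n" "j < n"
    have "(B ^\<^sub>m k) $$ (i,j) = complex_of_real r ^ k * (B' ^\<^sub>m k) $$ (i,j)"
      unfolding pw using ij B' by simp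
    moreover have "cmod ((B' ^\<^sub>m k) $$ (i,j)) \<le> c1 + c2"
      using bnd[of k] ij B' unfolding norm_bound_def by auto
    ultimately show "cmod ((B ^\<^sub>m k) $$ (i,j)) \<le> (c1 + c2) * r ^ k"
      using r0 by (simp add: norm_mult norm_power mult.commute mult_left_mono)
  qed
qed

definition idx :: "nat \<Rightarrow> 'n::finite" where
  "idx = (SOME h. bij_betw h {0..<CARD('n)} (UNIV::'n set))"

lemma idx_bij: "bij_betw (idx :: nat \<Rightarrow> 'n::finite) {0..<CARD('n)} UNIV"
proof -
  have "\<exists>h. bij_betw h {0..<CARD('n)} (UNIV::'n set)"
    using ex_bij_betw_nat_finite[of "UNIV::'n set"] by simp
  thus ?thesis unfolding idx_def by (rule someI_ex)
qed

lemma sum_idx: "(\<Sum>t\<in>UNIV. f t) = (\<Sum>l = 0..<CARD('n::finite). f (idx l :: 'n))"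
  using sum.reindex_bij_betw[OF idx_bij, of f] by simp

lemma idx_surj: "\<exists>l < CARD('n::finite). idx l = (t::'n)"
proof -
  have "t \<in> idx ` {0..<CARD('n)}" using idx_bij[where 'n='n] unfolding bij_betw_def by simp
  thus ?thesis by auto
qed

lemma vmat_nth: "mat a $ i $ j = (if i = j then a else 0)"
  by (simp add: Finite_Cartesian_Product.mat_def)

lemma idx_inj: "i < CARD('n::finite) \<Longrightarrow> j < CARD('n) \<Longrightarrow> (idx i :: 'n) = idx j \<longleftrightarrow> i = j"
  using idx_bij[where 'n='n] unfolding bij_betw_def inj_on_def by auto

definition to_mat :: "complex^'n^'n \<Rightarrow> complex Matrix.mat" where
  "to_mat A = Matrix.mat CARD('n) CARD('n) (\<lambda>(i,j). A $ idx i $ idx j)"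

lemma to_mat_index: "i < CARD('n) \<Longrightarrow> j < CARD('n) \<Longrightarrow> to_mat (A::complex^'n^'n) $$ (i,j) = A $ idx i $ idx j"
  by (simp add: to_mat_def)

lemma to_mat_carrier: "to_mat (A::complex^'n^'n) \<in> carrier_mat CARD('n) CARD('n)"
  by (simp add: to_mat_def)

lemma mpow_Suc': "mpow A (Suc k) = mpow A k ** A"
  by (induct k) (simp_all add: matrix_mul_assoc)

lemma to_mat_mult: "to_mat ((A::complex^'n^'n) ** B) = to_mat A * to_mat B"
  by (rule eq_matI) (auto simp: to_mat_def matrix_matrix_mult_def scalar_prod_def sum_idx)

lemma to_mat_one: "to_mat (mat 1 :: complex^'n^'n) = 1\<^sub>m CARD('n)"
  by (rule eq_matI) (auto simp: to_mat_def vmat_nth idx_inj)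

lemma to_mat_pow: "to_mat (mpow (A::complex^'n^'n) k) = to_mat A ^\<^sub>m k"
proof (induct k)
  case 0 have "to_mat (mpow A 0) = 1\<^sub>m CARD('n)" using to_mat_one by simp
    thus ?case by (simp add: to_mat_def)
next
  case (Suc k) show ?case by (simp only: mpow_Suc' to_mat_mult Suc pow_mat.simps)
qed

lemma stable_eig: assumes "stable (A::complex^'n^'n)" "eigenvalue (to_mat A) c"
  shows "cmod c < 1"
proof -
  obtain v where v: "v \<in> carrier_vec CARD('n)" "v \<noteq> 0\<^sub>v CARD('n)" "to_mat A *\<^sub>v v = c \<cdot>\<^sub>v v"
    using assms(2) unfolding eigenvalue_def eigenvector_def by (auto simp: to_mat_def)
  define w :: "complex^'n" where "w = (\<chi> t. vec_index v (the_inv_into {0..<CARD('n)} idx t))"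
  have wi: "w $ idx l = vec_index v l" if "l < CARD('n)" for l
    unfolding w_def using that the_inv_into_f_f[OF bij_betw_imp_inj_on[OF idx_bij[where 'n='n]]] by simp
  have "A *v w = c *s w"
  proof (rule cvec_eqI)
    fix t :: 'n
    obtain i where i: "i < CARD('n)" "idx i = t" using idx_surj by blast
    have "vec_index (to_mat A *\<^sub>v v) i = vec_index (c \<cdot>\<^sub>v v) i" using v(3) by simp
    hence "(\<Sum>l = 0..<CARD('n). A $ t $ idx l * vec_index v l) = c * vec_index v i"
      using i v(1) by (simp add: to_mat_def scalar_prod_def)
    moreover have "w $ t = vec_index v i" using wi[OF i(1)] i(2) by simp
    ultimately show "(A *v w) $ t = (c *s w) $ t"
      by (simp add: matrix_vector_mult_def sum_idx wi)
  qed
  moreover have "w \<noteq> 0"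
  proof
    assume "w = 0"
    hence "v = 0\<^sub>v CARD('n)" using v(1) wi by (intro eq_vecI) (auto simp: vec_eq_iff)
    thus False using v(2) by simp
  qed
  ultimately show ?thesis using assms(1) unfolding stable_def by auto
qed

lemma stable_pow_decay: assumes "stable (A::complex^'n^'n)"
  shows "\<exists>K r. 0 < r \<and> r < 1 \<and> (\<forall>k i j. cmod (mpow A k $ i $ j) \<le> K * r^k)"
proof -
  have ev: "\<And>c. eigenvalue (to_mat A) c \<Longrightarrow> cmod c < 1" using stable_eig[OF assms] .
  obtain K r where Kr: "0 < r" "r < 1"
    "\<forall>k i j. i < CARD('n) \<longrightarrow> j < CARD('n) \<longrightarrow> cmod ((to_mat A ^\<^sub>m k) $$ (i,j)) \<le> K * r^k"
    using jnf_pow_decay[OF to_mat_carrier ev] by metis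
  show ?thesis
  proof (rule exI[of _ K], rule exI[of _ r], intro conjI Kr(1,2) allI)
    fix k and i j :: 'n
    obtain i' where i': "i' < CARD('n)" "idx i' = i" using idx_surj by blast
    obtain j' where j': "j' < CARD('n)" "idx j' = j" using idx_surj by blast
    have "(to_mat A ^\<^sub>m k) $$ (i',j') = mpow A k $ i $ j"
      unfolding to_mat_pow[symmetric] using i' j' by (simp add: to_mat_index)
    thus "cmod (mpow A k $ i $ j) \<le> K * r^k" using Kr(3) i'(1) j'(1) by metis
  qed
qed



definition csc :: "complex \<Rightarrow> complex^'b^'a \<Rightarrow> complex^'b^'a" where
  "csc c X = (\<chi> i j. c * X $ i $ j)"

lemma csc_nth[simp]: "csc c X $ i $ j = c * X $ i $ j"
  by (simp add: csc_def)

lemma cadj_nth[simp]: "cadj X $ i $ j = cnj (X $ j $ i)"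
  by (simp add: cadj_def)

lemma mmult_nth: "(X ** Y) $ i $ j = (\<Sum>k\<in>UNIV. X $ i $ k * Y $ k $ j)"
  by (simp add: matrix_matrix_mult_def)

lemma mat_mult_csc: "mat c ** (X::complex^'b^'a) = csc c X"
  by (simp add: vec_eq_iff mmult_nth vmat_nth if_distrib [of "\<lambda>x. x * y" for y] sum.delta cong: if_cong)

lemma csc_mult1: "csc c X ** Y = csc c (X ** Y)"
  by (simp add: vec_eq_iff mmult_nth sum_distrib_left ac_simps)

lemma csc_mult2: "X ** csc c Y = csc c (X ** Y)"
  by (simp add: vec_eq_iff mmult_nth sum_distrib_left ac_simps)

lemma csc_csc: "csc a (csc b X) = csc (a * b) X"
  by (simp add: vec_eq_iff)

lemma csc_one[simp]: "csc 1 X = X"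
  by (simp add: vec_eq_iff)

lemma csc_zero[simp]: "csc 0 X = 0" "csc c 0 = 0"
  by (simp_all add: vec_eq_iff)

lemma csc_add: "csc c (X + Y) = csc c X + csc c Y"
  by (simp add: vec_eq_iff algebra_simps)

lemma csc_diff: "csc c (X - Y) = csc c X - csc c Y"
  by (simp add: vec_eq_iff algebra_simps)

lemma csc_add2: "csc (a + b) X = csc a X + csc b X"
  by (simp add: vec_eq_iff algebra_simps)

lemma cadj_cadj[simp]: "cadj (cadj X) = X"
  by (simp add: vec_eq_iff)

lemma cadj_add: "cadj (X + Y) = cadj X + cadj Y"
  by (simp add: vec_eq_iff)

lemma cadj_diff: "cadj (X - Y) = cadj X - cadj Y"
  by (simp add: vec_eq_iff)

lemma cadj_zero[simp]: "cadj 0 = 0"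
  by (simp add: vec_eq_iff)

lemma cadj_mult: "cadj (X ** Y) = cadj Y ** cadj X"
  by (simp add: vec_eq_iff mmult_nth ac_simps)

lemma cadj_csc: "cadj (csc c X) = csc (cnj c) (cadj X)"
  by (simp add: vec_eq_iff)

lemma cadj_mat[simp]: "cadj (mat 1) = mat 1"
  by (simp add: vec_eq_iff vmat_nth)

lemma cadj_scaleR: "cadj (r *\<^sub>R X) = r *\<^sub>R cadj X"
  by (simp add: vec_eq_iff)

lemma mmult_add_rdistrib: "(X + Y) ** (Z::complex^'c^'b) = X ** Z + Y ** Z"
  by (simp add: vec_eq_iff mmult_nth distrib_right sum.distrib)

lemma mmult_diff_rdistrib: "(X - Y) ** (Z::complex^'c^'b) = X ** Z - Y ** Z"
  by (simp add: vec_eq_iff mmult_nth left_diff_distrib sum_subtractf)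

lemma mmult_diff_ldistrib: "(Z::complex^'b^'a) ** (X - Y) = Z ** X - Z ** Y"
  by (simp add: vec_eq_iff mmult_nth right_diff_distrib sum_subtractf)

lemma mmult_scaleR1: "(r *\<^sub>R (X::complex^'b^'a)) ** (Y::complex^'c^'b) = r *\<^sub>R (X ** Y)"
  by (simp add: vec_eq_iff matrix_matrix_mult_def, simp add: scaleR_sum_right)

lemma mmult_scaleR2: "(X::complex^'b^'a) ** (r *\<^sub>R (Y::complex^'c^'b)) = r *\<^sub>R (X ** Y)"
  by (simp add: vec_eq_iff matrix_matrix_mult_def, simp add: scaleR_sum_right)

lemma mpow_comm: "mpow A k ** A = A ** mpow A k"
  using mpow_Suc'[of A k] by simp

lemma mpow_cadj: "cadj (mpow A k) = mpow (cadj A) k"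
  by (induct k) (simp_all add: cadj_mult mpow_Suc' mpow_comm)

lemma norm_le_l1_gen: "norm (x::'a::real_normed_vector^'n) \<le> (\<Sum>i\<in>UNIV. norm (x$i))"
  unfolding norm_vec_def by (rule L2_set_le_sum) simp

lemma entry_le_norm: "cmod (X $ i $ j) \<le> norm (X::complex^'b^'a)"
proof -
  have "norm (X $ i $ j) \<le> norm (X $ i)" by (rule Finite_Cartesian_Product.norm_nth_le)
  also have "\<dots> \<le> norm X" by (rule Finite_Cartesian_Product.norm_nth_le)
  finally show ?thesis by simp
qed

lemma norm_le_entries: "norm (X::complex^'b^'a) \<le> (\<Sum>i\<in>UNIV. \<Sum>j\<in>UNIV. cmod (X $ i $ j))"
proof -
  have "norm X \<le> (\<Sum>i\<in>UNIV. norm (X $ i))" by (rule norm_le_l1_gen)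
  also have "\<dots> \<le> (\<Sum>i\<in>UNIV. \<Sum>j\<in>UNIV. cmod (X $ i $ j))"
    by (intro sum_mono norm_le_l1_gen)
  finally show ?thesis .
qed

lemma norm_le_entry_bound:
  assumes "\<And>i j. cmod (X $ i $ j) \<le> b"
  shows "norm (X::complex^'b^'a) \<le> of_nat (CARD('a) * CARD('b)) * b"
proof -
  have "norm X \<le> (\<Sum>i\<in>UNIV. \<Sum>j\<in>UNIV. cmod (X $ i $ j))" by (rule norm_le_entries)
  also have "\<dots> \<le> (\<Sum>i\<in>(UNIV::'a set). \<Sum>j\<in>(UNIV::'b set). b)"
    by (intro sum_mono assms)
  finally show ?thesis by simp
qed

lemma norm_mmult_le:
  "norm ((X::complex^'b^'a) ** (Y::complex^'c^'b)) \<le> of_nat (CARD('a) * CARD('c) * CARD('b)) * (norm X * norm Y)"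
proof -
  have "cmod ((X ** Y) $ i $ j) \<le> of_nat CARD('b) * (norm X * norm Y)" for i j
  proof -
    have "cmod ((X ** Y) $ i $ j) \<le> (\<Sum>k\<in>UNIV. cmod (X $ i $ k) * cmod (Y $ k $ j))"
      unfolding mmult_nth by (rule order_trans[OF norm_sum]) (simp add: norm_mult)
    also have "\<dots> \<le> (\<Sum>k\<in>(UNIV::'b set). norm X * norm Y)"
      by (intro sum_mono mult_mono entry_le_norm) auto
    finally show ?thesis by simp
  qed
  hence "norm (X ** Y) \<le> of_nat (CARD('a) * CARD('c)) * (of_nat CARD('b) * (norm X * norm Y))"
    by (rule norm_le_entry_bound)
  thus ?thesis by (simp add: ac_simps)
qed

lemma norm_cadj_le: "norm (cadj (X::complex^'b^'a)) \<le> of_nat (CARD('b) * CARD('a)) * norm X"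
  by (rule norm_le_entry_bound) (simp add: entry_le_norm)

lemma norm_csc_le: "norm (csc c (X::complex^'b^'a)) \<le> of_nat (CARD('a) * CARD('b)) * (cmod c * norm X)"
  by (rule norm_le_entry_bound) (simp add: norm_mult entry_le_norm mult_left_mono)

lemma bl_cadj: "bounded_linear (cadj :: complex^'b^'a \<Rightarrow> _)"
proof (rule bounded_linear_intro[where K="of_nat (CARD('b) * CARD('a))"])
  show "norm (cadj x) \<le> norm x * of_nat (CARD('b) * CARD('a))" for x :: "complex^'b^'a"
    using norm_cadj_le[of x] by (simp only: mult.commute)
qed (simp_all add: cadj_add cadj_scaleR)

lemma bl_mmult1: "bounded_linear (\<lambda>X::complex^'b^'a. X ** (Y::complex^'c^'b))"
  by (rule bounded_linear_intro[where K="of_nat (CARD('a) * CARD('c) * CARD('b)) * norm Y"])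
     (insert norm_mmult_le, simp_all add: mmult_add_rdistrib mmult_scaleR1 ac_simps)

lemma bl_mmult2: "bounded_linear (\<lambda>Y::complex^'c^'b. (X::complex^'b^'a) ** Y)"
  by (rule bounded_linear_intro[where K="of_nat (CARD('a) * CARD('c) * CARD('b)) * norm X"])
     (insert norm_mmult_le, simp_all add: matrix_add_ldistrib mmult_scaleR2 ac_simps)

lemma bl_entry: "bounded_linear (\<lambda>X::complex^'b^'a. X $ i $ j)"
  by (rule bounded_linear_intro[where K=1]) (simp_all add: entry_le_norm)



lemma csc_scaleR: "csc c (r *\<^sub>R X) = r *\<^sub>R csc c X"
  by (simp add: vec_eq_iff scaleR_conv_of_real)

lemma bl_csc: "bounded_linear (csc c :: complex^'b^'a \<Rightarrow> _)"
proof (rule bounded_linear_intro[where K="of_nat (CARD('a) * CARD('b)) * cmod c"])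
  show "norm (csc c x) \<le> norm x * (of_nat (CARD('a) * CARD('b)) * cmod c)" for x :: "complex^'b^'a"
    using norm_csc_le[of c x] by (simp only: ac_simps)
qed (simp_all add: csc_add csc_scaleR)

lemma pow_norm_decay: assumes "stable A"
  shows "\<exists>K r. 0 \<le> K \<and> 0 < r \<and> r < 1 \<and> (\<forall>k. norm (mpow A k) \<le> K * r^k)"
proof -
  obtain K r where Kr: "0 < r" "r < 1" "\<And>k i j. cmod (mpow A k $ i $ j) \<le> K * r^k"
    using stable_pow_decay[OF assms] by metis
  define K' where "K' = of_nat (CARD('a) * CARD('a)) * \<bar>K\<bar>"
  have "norm (mpow A k) \<le> K' * r^k" for k
  proof -
    have "norm (mpow A k) \<le> of_nat (CARD('a) * CARD('a)) * (K * r^k)"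
      by (rule norm_le_entry_bound) (rule Kr(3))
    also have "\<dots> \<le> K' * r^k" unfolding K'_def using Kr(1)
      by (simp add: mult.assoc mult_left_mono mult_right_mono)
    finally show ?thesis .
  qed
  thus ?thesis using Kr(1,2) unfolding K'_def by (intro exI[of _ K'] exI[of _ r]) (auto simp: K'_def)
qed

lemma matrix_inv_eq:
  assumes "X ** S = mat 1" "S ** X = mat 1"
  shows "matrix_inv (X::complex^'n^'n) = S"
proof -
  have inv: "X ** matrix_inv X = mat 1 \<and> matrix_inv X ** X = mat 1"
    unfolding matrix_inv_def by (rule someI[of _ S]) (use assms in simp)
  have "matrix_inv X = matrix_inv X ** (X ** S)" using assms by simp
  also have "\<dots> = (matrix_inv X ** X) ** S" by (simp add: matrix_mul_assoc)
  also have "\<dots> = S" using inv by simp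
  finally show ?thesis .
qed

lemma geom_bound_summable:
  fixes f :: "nat \<Rightarrow> 'a::banach"
  assumes "\<And>j. norm (f j) \<le> K * q^j" "0 \<le> q" "q < 1"
  shows "summable f"
proof (rule summable_comparison_test)
  show "\<exists>N. \<forall>n\<ge>N. norm (f n) \<le> K * q^n" using assms(1) by blast
  show "summable (\<lambda>n. K * q^n)"
    using assms(2,3) by (intro summable_mult summable_geometric) simp
qed

lemma norm_mmult_le':
  assumes "norm (X::complex^'b^'a) \<le> a" "norm (Y::complex^'c^'b) \<le> b"
  shows "norm (X ** Y) \<le> of_nat (CARD('a) * CARD('c) * CARD('b)) * (a * b)"
proof -
  have "0 \<le> a" using assms(1) norm_ge_zero order_trans by blast
  hence "norm X * norm Y \<le> a * b" using assms by (intro mult_mono) auto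
  hence "of_nat (CARD('a) * CARD('c) * CARD('b)) * (norm X * norm Y)
        \<le> of_nat (CARD('a) * CARD('c) * CARD('b)) * (a * b)"
    by (intro mult_left_mono) auto
  thus ?thesis using norm_mmult_le[of X Y] by linarith
qed

lemma neumann:
  assumes "stable A" "cmod z < 1"
  shows "(\<lambda>j. csc (z^j) (mpow A j)) sums matrix_inv (mat 1 - mat z ** A)"
proof -
  obtain K r where Kr: "0 \<le> K" "0 < r" "r < 1" "\<And>k. norm (mpow A k) \<le> K * r^k"
    using pow_norm_decay[OF assms(1)] by metis
  define c where "c = (of_nat (CARD('a) * CARD('a)) :: real)"
  have "summable (\<lambda>j. csc (z^j) (mpow A j))"
  proof (rule geom_bound_summable)
    fix j
    have "norm (csc (z^j) (mpow A j)) \<le> c * (cmod z ^ j * norm (mpow A j))"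
      using norm_csc_le[of "z^j" "mpow A j"] by (simp add: c_def norm_power)
    also have "\<dots> \<le> c * (cmod z ^ j * (K * r^j))"
      using Kr(4)[of j] by (intro mult_left_mono) (auto simp: c_def)
    also have "\<dots> = (c * K) * (cmod z * r)^j" by (simp add: power_mult_distrib ac_simps)
    finally show "norm (csc (z^j) (mpow A j)) \<le> (c * K) * (cmod z * r)^j" .
    show "0 \<le> cmod z * r" using Kr by simp
    show "cmod z * r < 1" using Kr assms(2)
      by (metis less_eq_real_def mult_le_one mult_less_cancel_left1 norm_ge_zero not_le)
  qed
  then obtain S where S: "(\<lambda>j. csc (z^j) (mpow A j)) sums S" by (auto simp: summable_def)
  have "(\<lambda>j. csc z (A ** csc (z^j) (mpow A j))) sums csc z (A ** S)"
    by (rule bounded_linear.sums[OF bl_csc bounded_linear.sums[OF bl_mmult2 S]])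
  hence "(\<lambda>j. csc (z^Suc j) (mpow A (Suc j))) sums csc z (A ** S)"
    by (simp add: csc_mult2 csc_csc)
  hence "(\<lambda>j. csc (z^j) (mpow A j)) sums (csc z (A ** S) + mat 1)"
    by (subst (asm) sums_Suc_iff) simp
  hence S1: "S = csc z (A ** S) + mat 1" using S sums_unique2 by blast
  have "(\<lambda>j. csc z (csc (z^j) (mpow A j) ** A)) sums csc z (S ** A)"
    by (rule bounded_linear.sums[OF bl_csc bounded_linear.sums[OF bl_mmult1 S]])
  hence "(\<lambda>j. csc (z^Suc j) (mpow A (Suc j))) sums csc z (S ** A)"
    by (simp add: csc_mult1 csc_csc mpow_Suc'[symmetric])
  hence "(\<lambda>j. csc (z^j) (mpow A j)) sums (csc z (S ** A) + mat 1)"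
    by (subst (asm) sums_Suc_iff) simp
  hence S2: "S = csc z (S ** A) + mat 1" using S sums_unique2 by blast
  have S1': "S - csc z (A ** S) = mat 1" using S1 by (metis add_diff_cancel_left')
  have S2': "S - csc z (S ** A) = mat 1" using S2 by (metis add_diff_cancel_left')
  have "(mat 1 - mat z ** A) ** S = mat 1"
    using S1' by (simp add: mmult_diff_rdistrib matrix_mul_assoc mat_mult_csc csc_mult1)
  moreover have "S ** (mat 1 - mat z ** A) = mat 1"
    using S2' by (simp add: mmult_diff_ldistrib mat_mult_csc csc_mult2)
  ultimately show ?thesis using matrix_inv_eq S by metis
qed

definition coef :: "complex^'k^'m \<Rightarrow> complex^'n^'m \<Rightarrow> complex^'n^'n \<Rightarrow> complex^'k^'n \<Rightarrow> nat \<Rightarrow> complex^'k^'m" where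
  "coef D C A B j = (if j = 0 then D else C ** mpow A (j - 1) ** B)"

lemma coef_0[simp]: "coef D C A B 0 = D" and coef_Suc[simp]: "coef D C A B (Suc j) = C ** mpow A j ** B"
  by (simp_all add: coef_def)

lemma transfer_sums:
  assumes "stable A" "cmod z < 1"
  shows "(\<lambda>j. csc (z^j) (coef D C A B j)) sums transfer D C A B z"
proof -
  let ?Mi = "matrix_inv (mat 1 - mat z ** A)"
  have "(\<lambda>j. csc z ((C ** csc (z^j) (mpow A j)) ** B)) sums csc z ((C ** ?Mi) ** B)"
    by (rule bounded_linear.sums[OF bl_csc bounded_linear.sums[OF bl_mmult1 bounded_linear.sums[OF bl_mmult2 neumann[OF assms]]]])
  hence "(\<lambda>j. csc (z^Suc j) (coef D C A B (Suc j))) sums csc z (C ** ?Mi ** B)"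
    by (simp add: csc_mult1 csc_mult2 csc_csc)
  hence "(\<lambda>j. csc (z^j) (coef D C A B j)) sums (csc z (C ** ?Mi ** B) + D)"
    by (subst (asm) sums_Suc_iff) simp
  moreover have "transfer D C A B z = csc z (C ** ?Mi ** B) + D"
    by (simp add: transfer_def mat_mult_csc csc_mult1 add.commute)
  ultimately show ?thesis by simp
qed

lemma gram_sums:
  fixes A :: "complex^'n^'n" and C :: "complex^'n^'m"
  assumes "stable A"
  shows "(\<lambda>j. cadj (coef D1 C A B1 j) ** coef D2 C A B2 j) sums (cadj D1 ** D2 + cadj B1 ** obs_gramian C A ** B2)"
proof -
  obtain K r where Kr: "0 \<le> K" "0 < r" "r < 1" "\<And>k. norm (mpow A k) \<le> K * r^k"
    using pow_norm_decay[OF assms(1)] by metis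
  define T where "T = (\<lambda>\<nu>. mpow (cadj A) \<nu> ** cadj C ** C ** mpow A \<nu>)"
  define c0 where "c0 = (of_nat (CARD('n) * CARD('n)) :: real)"
  define c1 where "c1 = (of_nat (CARD('n) * CARD('m) * CARD('n)) :: real)"
  define c2 where "c2 = (of_nat (CARD('n) * CARD('n) * CARD('m)) :: real)"
  define c3 where "c3 = (of_nat (CARD('n) * CARD('n) * CARD('n)) :: real)"
  have "summable T"
  proof (rule geom_bound_summable)
    fix \<nu>
    have "norm (mpow (cadj A) \<nu>) \<le> c0 * (K * r^\<nu>)"
      unfolding mpow_cadj[symmetric] c0_def
      by (rule order_trans[OF norm_cadj_le]) (intro mult_left_mono Kr(4), simp)
    hence "norm (mpow (cadj A) \<nu> ** cadj C) \<le> c1 * ((c0 * (K * r^\<nu>)) * norm (cadj C))"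
      unfolding c1_def by (rule norm_mmult_le') simp
    hence "norm (mpow (cadj A) \<nu> ** cadj C ** C) \<le> c2 * ((c1 * ((c0 * (K * r^\<nu>)) * norm (cadj C))) * norm C)"
      unfolding c2_def by (rule norm_mmult_le') simp
    hence "norm (T \<nu>) \<le> c3 * ((c2 * ((c1 * ((c0 * (K * r^\<nu>)) * norm (cadj C))) * norm C)) * (K * r^\<nu>))"
      unfolding c3_def T_def by (rule norm_mmult_le'[OF _ Kr(4)])
    also have "\<dots> = (c3 * c2 * c1 * c0 * K * norm (cadj C) * norm C * K) * (r * r)^\<nu>"
      by (simp add: power_mult_distrib ac_simps)
    finally show "norm (T \<nu>) \<le> (c3 * c2 * c1 * c0 * K * norm (cadj C) * norm C * K) * (r * r)^\<nu>" .
    show "0 \<le> r * r" by simp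
    show "r * r < 1" using Kr by (metis less_eq_real_def mult_le_one mult_less_cancel_left1 not_le)
  qed
  hence Y: "T sums obs_gramian C A" unfolding obs_gramian_def T_def by (simp add: summable_sums)
  have "(\<lambda>\<nu>. cadj B1 ** T \<nu> ** B2) sums (cadj B1 ** obs_gramian C A ** B2)"
    by (rule bounded_linear.sums[OF bl_mmult1 bounded_linear.sums[OF bl_mmult2 Y]])
  moreover have "cadj B1 ** T j ** B2 = cadj (coef D1 C A B1 (Suc j)) ** coef D2 C A B2 (Suc j)" for j
    by (simp add: T_def cadj_mult mpow_cadj matrix_mul_assoc)
  ultimately have "(\<lambda>j. cadj (coef D1 C A B1 (Suc j)) ** coef D2 C A B2 (Suc j)) sums (cadj B1 ** obs_gramian C A ** B2)"
    by simp
  hence "(\<lambda>j. cadj (coef D1 C A B1 j) ** coef D2 C A B2 j) sums (cadj B1 ** obs_gramian C A ** B2 + cadj D1 ** D2)"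
    by (subst (asm) sums_Suc_iff) simp
  thus ?thesis by (simp add: add.commute)
qed



lemma powser_unique0:
  fixes a :: "nat \<Rightarrow> complex"
  assumes "\<And>w. cmod w < 1 \<Longrightarrow> (\<lambda>i. a i * w^i) sums 0"
  shows "a m = 0"
proof (cases "m = 0")
  case True
  have "(\<lambda>i. a i * 0^i) sums 0" using assms[of 0] by simp
  thus ?thesis using True by (simp add: powser_sums_zero_iff)
next
  case False
  show ?thesis
  proof (rule ccontr)
    assume am: "a m \<noteq> 0"
    have sm: "\<And>x. norm (x - 0) < 1 \<Longrightarrow> (\<lambda>n. a n * (x - 0) ^ n) sums ((\<lambda>_. 0::complex) x)"
      using assms by simp
    show False
    proof (rule powser_0_nonzero[of 1 0 a "\<lambda>_. 0::complex" m, OF _ sm _ am])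
      fix s :: real assume s: "0 < s" and nz: "\<And>z::complex. z \<in> cball 0 s - {0} \<Longrightarrow> (\<lambda>_. 0::complex) z \<noteq> 0"
      show False using nz[of "complex_of_real s"] s by (simp add: dist_norm)
    qed (use False in auto)
  qed
qed

lemma powser_unique_mat:
  assumes "\<And>w. cmod w < 1 \<Longrightarrow> (\<lambda>i. csc (w^i) (c i)) sums (0::complex^'b^'a)"
  shows "c m = 0"
proof -
  have "c m $ p $ q = 0" for p q
  proof (rule powser_unique0[where a="\<lambda>i. c i $ p $ q"])
    fix w :: complex assume "cmod w < 1"
    from bounded_linear.sums[OF bl_entry[of p q] assms[OF this]]
    show "(\<lambda>i. c i $ p $ q * w ^ i) sums 0" by (simp add: mult.commute)
  qed
  thus ?thesis by (simp add: vec_eq_iff)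
qed

lemma cadj_transfer_sums:
  assumes "stable A" "cmod z < 1"
  shows "(\<lambda>j. csc (cnj z ^ j) (cadj (coef D C A B j))) sums cadj (transfer D C A B z)"
  using bounded_linear.sums[OF bl_cadj transfer_sums[OF assms]] by (simp add: cadj_csc)

lemma coef_identity:
  fixes A :: "complex^'n^'n" and C :: "complex^'n^'m"
    and BM :: "complex^'k^'n" and BN :: "complex^'l^'n"
    and DM :: "complex^'k^'m" and DN :: "complex^'l^'m"
  assumes st: "stable A"
    and hyp: "\<forall>z\<in>ball 0 1. \<forall>w\<in>ball 0 1.
           transfer DM C A BM w ** cadj (transfer DM C A BM z)
         = transfer DN C A BN w ** cadj (transfer DN C A BN z)"
  shows "coef DM C A BM i ** cadj (coef DM C A BM j) = coef DN C A BN i ** cadj (coef DN C A BN j)"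
proof -
  let ?M = "coef DM C A BM" and ?N = "coef DN C A BN"
  have step1: "?M i ** cadj (transfer DM C A BM z) = ?N i ** cadj (transfer DN C A BN z)"
    if z: "cmod z < 1" for z i
  proof -
    let ?XM = "cadj (transfer DM C A BM z)" and ?XN = "cadj (transfer DN C A BN z)"
    have "?M i ** ?XM - ?N i ** ?XN = 0"
    proof (rule powser_unique_mat[where c = "\<lambda>i. ?M i ** ?XM - ?N i ** ?XN"])
      fix w :: complex assume w: "cmod w < 1"
      have "(\<lambda>i. csc (w^i) (?M i) ** ?XM - csc (w^i) (?N i) ** ?XN)
            sums (transfer DM C A BM w ** ?XM - transfer DN C A BN w ** ?XN)"
        by (intro sums_diff bounded_linear.sums[OF bl_mmult1] transfer_sums st w)
      moreover have "transfer DM C A BM w ** ?XM - transfer DN C A BN w ** ?XN = 0"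
        using hyp w z by (simp add: dist_norm)
      ultimately show "(\<lambda>i. csc (w^i) (?M i ** ?XM - ?N i ** ?XN)) sums 0"
        by (simp add: csc_mult1 csc_diff)
    qed
    thus ?thesis by simp
  qed
  have "?M i ** cadj (?M j) - ?N i ** cadj (?N j) = 0"
  proof (rule powser_unique_mat[where c = "\<lambda>j. ?M i ** cadj (?M j) - ?N i ** cadj (?N j)"])
    fix u :: complex assume u: "cmod u < 1"
    hence z: "cmod (cnj u) < 1" by simp
    have "(\<lambda>j. ?M i ** csc (cnj (cnj u) ^ j) (cadj (?M j)) - ?N i ** csc (cnj (cnj u) ^ j) (cadj (?N j)))
          sums (?M i ** cadj (transfer DM C A BM (cnj u)) - ?N i ** cadj (transfer DN C A BN (cnj u)))"
      by (intro sums_diff bounded_linear.sums[OF bl_mmult2] cadj_transfer_sums st z)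
    thus "(\<lambda>j. csc (u^j) (?M i ** cadj (?M j) - ?N i ** cadj (?N j))) sums 0"
      using step1[OF z, of i] by (simp add: csc_mult2 csc_diff)
  qed
  thus ?thesis by simp
qed



lemma mv_scale: "(A::complex^'b^'a) *v (c *s x) = c *s (A *v x)"
  by (simp add: vec_eq_iff matrix_vector_mult_def sum_distrib_left ac_simps)

lemma mv_scaleR: "(A::complex^'b^'a) *v (r *\<^sub>R x) = r *\<^sub>R (A *v x)"
  by (simp add: vec_eq_iff matrix_vector_mult_def scaleR_sum_right)

lemma cinner_adj: "cinner ((M::complex^'b^'a) *v x) y = cinner x (cadj M *v y)"
proof -
  have "cinner (M *v x) y = (\<Sum>i\<in>UNIV. \<Sum>j\<in>UNIV. M $ i $ j * x $ j * cnj (y $ i))"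
    by (simp add: cinner_def matrix_vector_mult_def sum_distrib_right)
  also have "\<dots> = (\<Sum>j\<in>UNIV. \<Sum>i\<in>UNIV. M $ i $ j * x $ j * cnj (y $ i))"
    by (rule sum.swap)
  also have "\<dots> = cinner x (cadj M *v y)"
    by (simp add: cinner_def matrix_vector_mult_def sum_distrib_left ac_simps)
  finally show ?thesis .
qed

lemma cinner_add_left: "cinner (x + y) z = cinner x z + cinner y z"
  by (simp add: cinner_def distrib_right sum.distrib)
lemma cinner_add_right: "cinner z (x + y) = cinner z x + cinner z y"
  by (simp add: cinner_def distrib_left sum.distrib)
lemma cinner_diff_left: "cinner (x - y) z = cinner x z - cinner y z"
  by (simp add: cinner_def left_diff_distrib sum_subtractf)
lemma cinner_diff_right: "cinner z (x - y) = cinner z x - cinner z y"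
  by (simp add: cinner_def right_diff_distrib sum_subtractf)
lemma cinner_scale_left: "cinner (c *s x) y = c * cinner x y"
  by (simp add: cinner_def sum_distrib_left ac_simps)
lemma cinner_scale_right: "cinner x (c *s y) = cnj c * cinner x y"
  by (simp add: cinner_def sum_distrib_left ac_simps)
lemma cinner_zero[simp]: "cinner 0 x = 0" "cinner x 0 = 0"
  by (simp_all add: cinner_def)
lemma cinner_cnj: "cinner y x = cnj (cinner x y)"
  by (simp add: cinner_def ac_simps)

lemma cinner_self: "cinner x x = complex_of_real ((norm x)^2)"
proof -
  have "cinner x x = (\<Sum>i\<in>UNIV. complex_of_real ((cmod (x $ i))^2))"
    unfolding cinner_def by (intro sum.cong refl) (rule complex_norm_square[symmetric])
  also have "\<dots> = complex_of_real (\<Sum>i\<in>UNIV. (cmod (x $ i))^2)" by simp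
  also have "(\<Sum>i\<in>UNIV. (cmod (x $ i))^2) = (norm x)^2"
    by (simp add: norm_vec_def L2_set_def sum_nonneg)
  finally show ?thesis .
qed

lemma cinner_self_eq_0: "cinner x x = 0 \<longleftrightarrow> x = 0"
  by (simp add: cinner_self)

lemma herm_from_inner:
  assumes "\<And>x y. cinner ((M::complex^'a^'a) *v x) y = cinner x (M *v y)"
  shows "cadj M = M"
proof -
  have "(cadj M - M) *v y = 0" for y
  proof -
    have "cinner x ((cadj M - M) *v y) = 0" for x
      using assms[of x y] by (simp add: matrix_vector_mult_diff_rdistrib cinner_diff_right cinner_adj)
    from this[of "(cadj M - M) *v y"] show ?thesis by (simp add: cinner_self_eq_0)
  qed
  hence "cadj M - M = 0" by (simp add: matrix_eq)
  thus ?thesis by simp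
qed

definition penrose :: "complex^'n^'m \<Rightarrow> complex^'m^'n \<Rightarrow> bool" where
  "penrose A X \<longleftrightarrow> A ** X ** A = A \<and> X ** A ** X = X \<and> cadj (A ** X) = A ** X \<and> cadj (X ** A) = X ** A"

lemma penrose_unique:
  assumes X: "penrose A X" and Y: "penrose A Y"
  shows "X = Y"
proof -
  have X1: "A ** X ** A = A" and X2: "X ** A ** X = X" and X3: "cadj (A ** X) = A ** X" and X4: "cadj (X ** A) = X ** A"
    using X by (auto simp: penrose_def)
  have Y1: "A ** Y ** A = A" and Y2: "Y ** A ** Y = Y" and Y3: "cadj (A ** Y) = A ** Y" and Y4: "cadj (Y ** A) = Y ** A"
    using Y by (auto simp: penrose_def)
  have cA1: "cadj A = cadj A ** cadj (A ** Y)"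
    using arg_cong[OF Y1, of cadj] by (simp add: cadj_mult matrix_mul_assoc)
  have cA2: "cadj A = cadj (X ** A) ** cadj A"
    using arg_cong[OF X1, of cadj] by (simp add: cadj_mult matrix_mul_assoc)
  have "X = X ** (A ** X)" using X2 by (simp add: matrix_mul_assoc)
  also have "\<dots> = X ** cadj (A ** X)" using X3 by simp
  also have "\<dots> = X ** cadj X ** cadj A" by (simp add: cadj_mult matrix_mul_assoc)
  also have "\<dots> = X ** cadj X ** (cadj A ** cadj (A ** Y))" using cA1 by simp
  also have "\<dots> = X ** cadj (A ** X) ** cadj (A ** Y)" by (simp add: cadj_mult matrix_mul_assoc)
  also have "\<dots> = X ** (A ** X) ** (A ** Y)" using X3 Y3 by simp
  also have "\<dots> = (X ** A ** X) ** A ** Y" by (simp add: matrix_mul_assoc)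
  also have "\<dots> = X ** A ** Y" using X2 by simp
  finally have XX: "X = X ** A ** Y" .
  have "Y = (Y ** A) ** Y" using Y2 by (simp add: matrix_mul_assoc)
  also have "\<dots> = cadj (Y ** A) ** Y" using Y4 by simp
  also have "\<dots> = cadj A ** cadj Y ** Y" by (simp add: cadj_mult)
  also have "\<dots> = (cadj (X ** A) ** cadj A) ** cadj Y ** Y" using cA2 by simp
  also have "\<dots> = cadj (X ** A) ** cadj (Y ** A) ** Y" by (simp add: cadj_mult matrix_mul_assoc)
  also have "\<dots> = (X ** A) ** (Y ** A) ** Y" using X4 Y4 by simp
  also have "\<dots> = X ** A ** (Y ** A ** Y)" by (simp add: matrix_mul_assoc)
  also have "\<dots> = X ** A ** Y" using Y2 by simp
  finally show ?thesis using XX by simp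
qed



lemma inner_cinner: "inner x y = Re (cinner x (y::complex^'n))"
  by (simp add: inner_vec_def cinner_def inner_complex_def Re_sum)

context
  fixes G :: "complex^'n^'n"
  assumes herm: "cadj G = G"
begin

lemma herm_inner: "cinner (G *v x) y = cinner x (G *v y)"
  using cinner_adj[of G x y] herm by simp

lemma V_ker: "G *v (G *v a) = 0 \<Longrightarrow> G *v a = 0"
  using herm_inner[of a "G *v a"] by (simp add: cinner_self_eq_0)

lemma G_perp: "G *v z = 0 \<Longrightarrow> cinner (G *v a) z = 0"
  using herm_inner[of a z] by simp

lemma G_perp': "G *v z = 0 \<Longrightarrow> cinner z (G *v a) = 0"
  using herm_inner[of z a] by simp

lemma decomp: "\<exists>a q. y = G *v a + q \<and> G *v q = 0"
proof -
  define V where "V = range (\<lambda>a. G *v a)"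
  have sub: "real_vector.subspace V" unfolding real_vector.subspace_def V_def
  proof (intro conjI ballI allI)
    show "0 \<in> range ((*v) G)" by (metis matrix_vector_mult_0_right rangeI)
    fix x y assume "x \<in> range ((*v) G)" "y \<in> range ((*v) G)"
    then obtain a b where "x = G *v a" "y = G *v b" by auto
    thus "x + y \<in> range ((*v) G)" by (metis matrix_vector_right_distrib rangeI)
  next
    fix c :: real and x assume "x \<in> range ((*v) G)"
    then obtain a where "x = G *v a" by auto
    thus "c *\<^sub>R x \<in> range ((*v) G)" by (metis mv_scaleR rangeI)
  qed
  obtain p q where pq: "p \<in> real_vector.span V" "\<And>w. w \<in> real_vector.span V \<Longrightarrow> orthogonal q w" "y = p + q"
    using orthogonal_subspace_decomp_exists[of V y] by metis
  have spanV: "real_vector.span V = V" using sub by simp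
  have Re0: "Re (cinner q (G *v w)) = 0" for w
    using pq(2)[of "G *v w"] spanV unfolding V_def Linear_Algebra.orthogonal_def by (simp add: inner_cinner)
  have "cinner q (G *v w) = 0" for w
  proof (rule complex_eqI)
    show "Re (cinner q (G *v w)) = Re 0" using Re0 by simp
    have "Re (cinner q (G *v (\<i> *s w))) = 0" by (rule Re0)
    thus "Im (cinner q (G *v w)) = Im 0" by (simp add: mv_scale cinner_scale_right)
  qed
  hence "cinner (G *v q) w = 0" for w by (simp add: herm_inner)
  hence Gq: "G *v q = 0" using cinner_self_eq_0 by blast
  from pq(1) spanV obtain a where "p = G *v a" unfolding V_def by auto
  thus ?thesis using pq(3) Gq by blast
qed

definition spec :: "complex^'n \<Rightarrow> complex^'n \<Rightarrow> bool" where
  "spec y u \<longleftrightarrow> u \<in> range (\<lambda>a. G *v a) \<and> G *v (y - G *v u) = 0"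

lemma spec_ex: "\<exists>u. spec y u"
proof -
  obtain a q where aq: "y = G *v a + q" "G *v q = 0" using decomp by blast
  obtain b q' where bq: "a = G *v b + q'" "G *v q' = 0" using decomp by blast
  have "G *v (G *v b) = G *v a" using bq by (simp add: matrix_vector_right_distrib)
  hence "spec y (G *v b)" unfolding spec_def using aq
    by (simp add: matrix_vector_right_distrib matrix_vector_mult_diff_distrib)
  thus ?thesis by blast
qed

lemma spec_uniq: assumes "spec y u1" "spec y u2" shows "u1 = u2"
proof -
  obtain a1 where a1: "u1 = G *v a1" using assms(1) unfolding spec_def by auto
  obtain a2 where a2: "u2 = G *v a2" using assms(2) unfolding spec_def by auto
  have "G *v (G *v (u1 - u2)) = 0"
    using assms unfolding spec_def
    by (simp add: matrix_vector_mult_diff_distrib)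
  hence "G *v (G *v (G *v (a1 - a2))) = 0" using a1 a2 by (simp add: matrix_vector_mult_diff_distrib)
  hence "G *v (G *v (a1 - a2)) = 0" by (rule V_ker)
  hence "G *v (a1 - a2) = 0" by (rule V_ker)
  thus ?thesis using a1 a2 by (simp add: matrix_vector_mult_diff_distrib)
qed

definition Xf :: "complex^'n \<Rightarrow> complex^'n" where
  "Xf y = (SOME u. spec y u)"

lemma spec_X: "spec y (Xf y)"
  unfolding Xf_def using spec_ex by (rule someI_ex)

lemma X_eq: "spec y u \<Longrightarrow> Xf y = u"
  using spec_X spec_uniq by blast

lemma Xf_add: "Xf (y1 + y2) = Xf y1 + Xf y2"
proof (rule X_eq)
  obtain a1 where a1: "Xf y1 = G *v a1" "G *v (y1 - G *v Xf y1) = 0" using spec_X[of y1] unfolding spec_def by auto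
  obtain a2 where a2: "Xf y2 = G *v a2" "G *v (y2 - G *v Xf y2) = 0" using spec_X[of y2] unfolding spec_def by auto
  have "Xf y1 + Xf y2 = G *v (a1 + a2)" using a1 a2 by (simp add: matrix_vector_right_distrib)
  moreover have "G *v (y1 + y2 - G *v (Xf y1 + Xf y2)) = G *v (y1 - G *v Xf y1) + G *v (y2 - G *v Xf y2)"
    by (simp add: matrix_vector_right_distrib matrix_vector_mult_diff_distrib algebra_simps)
  ultimately show "spec (y1 + y2) (Xf y1 + Xf y2)" unfolding spec_def using a1 a2 by simp
qed

lemma Xf_scale: "Xf (c *s y) = c *s Xf y"
proof (rule X_eq)
  obtain a where a: "Xf y = G *v a" "G *v (y - G *v Xf y) = 0" using spec_X[of y] unfolding spec_def by auto
  have "c *s Xf y = G *v (c *s a)" using a by (simp add: mv_scale)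
  moreover have "G *v (c *s y - G *v (c *s Xf y)) = c *s (G *v (y - G *v Xf y))"
    by (simp add: mv_scale matrix_vector_mult_diff_distrib vector_ssub_ldistrib)
  ultimately show "spec (c *s y) (c *s Xf y)" unfolding spec_def using a by simp
qed

lemma Xf_linear: "Vector_Spaces.linear (*s) (*s) Xf"
  by unfold_locales (simp_all add: Xf_add Xf_scale)

definition Xm :: "complex^'n^'n" where "Xm = matrix Xf"

lemma Xm_works: "Xm *v y = Xf y"
  unfolding Xm_def by (rule matrix_works[OF Xf_linear])

lemma proj_herm:
  assumes "\<And>x. f x \<in> range (\<lambda>a. G *v a) \<and> G *v (x - f x) = 0"
  shows "cinner (f x) y = cinner x (f y)"
proof -
  obtain a where a: "f x = G *v a" using assms[of x] by auto
  obtain b where b: "f y = G *v b" using assms[of y] by auto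
  have "cinner (f x) y = cinner (f x) (f y) + cinner (f x) (y - f y)"
    by (simp add: cinner_diff_right)
  also have "cinner (f x) (y - f y) = 0" using a assms[of y] G_perp by simp
  also have "cinner x (f y) = cinner (f x) (f y) + cinner (x - f x) (f y)"
    by (simp add: cinner_diff_left)
  moreover have "cinner (x - f x) (f y) = 0" using b assms[of x] G_perp' by simp
  ultimately show ?thesis by simp
qed

lemma penrose_Xm: "penrose G Xm"
proof -
  have p0: "G *v (v - Xf (G *v v)) = 0" for v
  proof -
    have "G *v (G *v (v - Xf (G *v v))) = 0"
      using spec_X[of "G *v v"] unfolding spec_def by (simp add: matrix_vector_mult_diff_distrib)
    thus ?thesis by (rule V_ker)
  qed
  have p1: "G *v (Xf (G *v v)) = G *v v" for v
    using p0[of v] by (simp add: matrix_vector_mult_diff_distrib)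
  have p2: "Xf (G *v Xf y) = Xf y" for y
    by (rule X_eq) (use spec_X[of y] in \<open>simp add: spec_def\<close>)
  have p3: "\<And>x. G *v Xf x \<in> range (\<lambda>a. G *v a) \<and> G *v (x - G *v Xf x) = 0"
    using spec_X unfolding spec_def by auto
  have p4: "\<And>x. Xf (G *v x) \<in> range (\<lambda>a. G *v a) \<and> G *v (x - Xf (G *v x)) = 0"
  proof
    fix x
    show "Xf (G *v x) \<in> range (\<lambda>a. G *v a)" using spec_X[of "G *v x"] unfolding spec_def by auto
    show "G *v (x - Xf (G *v x)) = 0" by (rule p0)
  qed
  show ?thesis unfolding penrose_def
  proof (intro conjI)
    show "G ** Xm ** G = G" by (simp add: matrix_eq matrix_vector_mul_assoc[symmetric] Xm_works p1)
    show "Xm ** G ** Xm = Xm" by (simp add: matrix_eq matrix_vector_mul_assoc[symmetric] Xm_works p2)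
    show "cadj (G ** Xm) = G ** Xm"
      by (rule herm_from_inner) (simp add: matrix_vector_mul_assoc[symmetric] Xm_works proj_herm[OF p3])
    show "cadj (Xm ** G) = Xm ** G"
      by (rule herm_from_inner) (simp add: matrix_vector_mul_assoc[symmetric] Xm_works proj_herm[OF p4])
  qed
qed

end

lemma mp_herm_exists: "cadj G = G \<Longrightarrow> \<exists>X. penrose G X"
  using penrose_Xm by blast

lemma mp_inverse_penrose:
  assumes "\<exists>X. penrose A X"
  shows "penrose A (mp_inverse A)"
proof -
  have "\<exists>!X. penrose A X" using assms penrose_unique by blast
  hence "penrose A (THE X. penrose A X)" by (rule theI')
  thus ?thesis unfolding mp_inverse_def penrose_def[abs_def] by simp
qed



lemma mmult_zero[simp]: "(X::complex^'b^'a) ** (0::complex^'c^'b) = 0" "(0::complex^'b^'a) ** (Y::complex^'c^'b) = 0"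
  by (simp_all add: vec_eq_iff mmult_nth)

lemma diag_adj_X: "(cadj X ** X) $ a $ a = complex_of_real (\<Sum>k\<in>UNIV. (cmod (X $ k $ a))^2)"
proof -
  have "(cadj X ** X) $ a $ a = (\<Sum>k\<in>UNIV. complex_of_real ((cmod (X $ k $ a))^2))"
    unfolding mmult_nth cadj_nth by (intro sum.cong refl) (metis complex_norm_square mult.commute)
  thus ?thesis by simp
qed

lemma sos_zero:
  assumes "(\<lambda>j. cadj (X j) ** X j) sums (0::complex^'b^'b)"
  shows "X j = 0"
proof -
  have "X j $ k $ a = 0" for k a
  proof -
    have "(\<lambda>j. (cadj (X j) ** X j) $ a $ a) sums ((0::complex^'b^'b) $ a $ a)"
      by (rule bounded_linear.sums[OF bl_entry assms])
    hence "(\<lambda>j. Re ((cadj (X j) ** X j) $ a $ a)) sums Re 0"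
      using bounded_linear.sums[OF bounded_linear_Re] by fastforce
    hence s: "(\<lambda>j. \<Sum>k\<in>UNIV. (cmod (X j $ k $ a))^2) sums 0" by (simp add: diag_adj_X)
    have nn: "\<And>j. 0 \<le> (\<Sum>k\<in>UNIV. (cmod (X j $ k $ a))^2)" by (simp add: sum_nonneg)
    have "\<forall>j. (\<Sum>k\<in>UNIV. (cmod (X j $ k $ a))^2) = 0"
      using suminf_eq_zero_iff[OF sums_summable[OF s] nn] sums_unique[OF s] by simp
    hence "(\<Sum>k\<in>UNIV. (cmod (X j $ k $ a))^2) = 0" by blast
    hence "(cmod (X j $ k $ a))^2 = 0" by (subst (asm) sum_nonneg_eq_0_iff) auto
    thus ?thesis by simp
  qed
  thus ?thesis by (simp add: vec_eq_iff)
qed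

lemma gram_zero:
  assumes "X ** cadj X = (0::complex^'a^'a)"
  shows "X = 0"
proof -
  have "(\<lambda>j. cadj (cadj X) ** cadj X) sums 0" using assms by simp
  hence "cadj X = 0" by (rule sos_zero)
  thus ?thesis by (metis cadj_cadj cadj_zero)
qed

lemma main_alg:
  fixes M :: "nat \<Rightarrow> complex^'k^'m" and N :: "nat \<Rightarrow> complex^'l^'m"
  assumes Gs: "(\<lambda>j. cadj (M j) ** M j) sums G" and Hs: "(\<lambda>j. cadj (M j) ** N j) sums H"
    and R: "\<And>i j. M i ** cadj (M j) = N i ** cadj (N j)"
  shows "partial_isometry (mp_inverse G ** H) \<and> (\<forall>i. M i ** (mp_inverse G ** H) = N i)"
proof -
  have "(\<lambda>j. cadj (cadj (M j) ** M j)) sums cadj G" by (rule bounded_linear.sums[OF bl_cadj Gs])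
  hence "(\<lambda>j. cadj (M j) ** M j) sums cadj G" by (simp add: cadj_mult)
  hence hG: "cadj G = G" using Gs sums_unique2 by blast
  define Gp where "Gp = mp_inverse G"
  have pG: "penrose G Gp" unfolding Gp_def by (rule mp_inverse_penrose[OF mp_herm_exists[OF hG]])
  have G1: "G ** Gp ** G = G" and G2: "Gp ** G ** Gp = Gp" and G3: "cadj (G ** Gp) = G ** Gp"
    and G4: "cadj (Gp ** G) = Gp ** G" using pG by (auto simp: penrose_def)
  have a1: "G ** cadj Gp = Gp ** G"
  proof -
    have "cadj (Gp ** G) = cadj G ** cadj Gp" by (rule cadj_mult)
    thus ?thesis using G4 hG by simp
  qed
  have a2: "cadj Gp ** G = G ** Gp"
  proof -
    have "cadj (G ** Gp) = cadj Gp ** cadj G" by (rule cadj_mult)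
    thus ?thesis using G3 hG by simp
  qed
  have "penrose G (cadj Gp)" unfolding penrose_def
  proof (intro conjI)
    show "G ** cadj Gp ** G = G"
      using arg_cong[OF G1, of cadj] hG by (simp add: cadj_mult matrix_mul_assoc)
    show "cadj Gp ** G ** cadj Gp = cadj Gp"
      using arg_cong[OF G2, of cadj] hG by (simp add: cadj_mult matrix_mul_assoc)
    show "cadj (G ** cadj Gp) = G ** cadj Gp"
      using a1 G4 by simp
    show "cadj (cadj Gp ** G) = cadj Gp ** G"
      using a2 G3 by simp
  qed
  hence hGp: "cadj Gp = Gp" using penrose_unique[OF pG] by metis
  have comm: "G ** Gp = Gp ** G" using a1 hGp by simp
  define P where "P = Gp ** G"
  have GP: "G ** P = G" using G1 by (simp add: P_def matrix_mul_assoc)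
  have PGp: "P ** Gp = Gp" using G2 by (simp add: P_def)
  have PP: "P ** P = P"
  proof -
    have "P ** P = (Gp ** G ** Gp) ** G" by (simp add: P_def matrix_mul_assoc)
    thus ?thesis using G2 by (simp add: P_def)
  qed
  have GGp: "G ** Gp = P" using comm by (simp add: P_def)
  have MP: "M i ** P = M i" for i
  proof -
    define F where "F = mat 1 - P"
    have GF: "G ** F = 0" by (simp add: F_def mmult_diff_ldistrib GP)
    have "(\<lambda>j. cadj F ** (cadj (M j) ** M j) ** F) sums (cadj F ** G ** F)"
      by (rule bounded_linear.sums[OF bl_mmult1 bounded_linear.sums[OF bl_mmult2 Gs]])
    moreover have "cadj F ** G ** F = 0" using GF by (simp add: matrix_mul_assoc[symmetric])
    ultimately have "(\<lambda>j. cadj (M j ** F) ** (M j ** F)) sums 0"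
      by (simp add: cadj_mult matrix_mul_assoc)
    hence "M i ** F = 0" by (rule sos_zero)
    thus ?thesis by (simp add: F_def mmult_diff_ldistrib)
  qed
  have cHs: "(\<lambda>j. cadj (N j) ** M j) sums cadj H"
    using bounded_linear.sums[OF bl_cadj Hs] by (simp add: cadj_mult)
  have MG: "M l ** G = N l ** cadj H" for l
  proof -
    have "(\<lambda>j. M l ** (cadj (M j) ** M j)) sums (M l ** G)" by (rule bounded_linear.sums[OF bl_mmult2 Gs])
    moreover have "(\<lambda>j. N l ** (cadj (N j) ** M j)) sums (N l ** cadj H)" by (rule bounded_linear.sums[OF bl_mmult2 cHs])
    moreover have "M l ** (cadj (M j) ** M j) = N l ** (cadj (N j) ** M j)" for j
      using R[of l j] by (simp add: matrix_mul_assoc)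
    ultimately show ?thesis by (simp add: sums_iff)
  qed
  have GG: "G ** G = H ** cadj H"
  proof -
    have "(\<lambda>l. cadj (M l) ** M l ** G) sums (G ** G)" by (rule bounded_linear.sums[OF bl_mmult1 Gs])
    moreover have "(\<lambda>l. cadj (M l) ** N l ** cadj H) sums (H ** cadj H)" by (rule bounded_linear.sums[OF bl_mmult1 Hs])
    moreover have "cadj (M l) ** M l ** G = cadj (M l) ** N l ** cadj H" for l
      using MG[of l] by (simp add: matrix_mul_assoc[symmetric])
    ultimately show ?thesis by (simp add: sums_iff)
  qed
  have HN: "H ** cadj (N j) = G ** cadj (M j)" for j
  proof -
    have "(\<lambda>l. cadj (M l) ** N l ** cadj (N j)) sums (H ** cadj (N j))" by (rule bounded_linear.sums[OF bl_mmult1 Hs])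
    moreover have "(\<lambda>l. cadj (M l) ** M l ** cadj (M j)) sums (G ** cadj (M j))" by (rule bounded_linear.sums[OF bl_mmult1 Gs])
    moreover have "cadj (M l) ** N l ** cadj (N j) = cadj (M l) ** M l ** cadj (M j)" for l
      using R[of l j] by (simp add: matrix_mul_assoc[symmetric])
    ultimately show ?thesis by (simp add: sums_iff)
  qed
  define U where "U = Gp ** H"
  have UU: "U ** cadj U = P"
  proof -
    have "U ** cadj U = Gp ** (H ** cadj H) ** Gp" by (simp add: U_def cadj_mult hGp matrix_mul_assoc)
    also have "\<dots> = (Gp ** G) ** (G ** Gp)" using GG[symmetric] by (simp add: matrix_mul_assoc)
    also have "\<dots> = P ** P" using GGp by (simp add: P_def)
    also have "\<dots> = P" by (rule PP)
    finally show ?thesis .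
  qed
  have PU: "P ** U = U" using PGp by (simp add: U_def matrix_mul_assoc)
  have e1: "M i ** U ** cadj (N j) = M i ** cadj (M j)" for i j
  proof -
    have "M i ** U ** cadj (N j) = M i ** Gp ** (G ** cadj (M j))" using HN[of j] by (simp add: U_def matrix_mul_assoc[symmetric])
    also have "\<dots> = (M i ** P) ** cadj (M j)" by (simp add: P_def matrix_mul_assoc)
    finally show ?thesis using MP by simp
  qed
  have e2: "M i ** U ** cadj U ** cadj (M j) = M i ** cadj (M j)" for i j
  proof -
    have "M i ** U ** cadj U ** cadj (M j) = M i ** (U ** cadj U) ** cadj (M j)" by (simp add: matrix_mul_assoc)
    thus ?thesis using UU MP by simp
  qed
  have MU: "M i ** U = N i" for i
  proof -
    define E where "E = N i - M i ** U"
    have "E ** cadj E = N i ** cadj (N i) - cadj (M i ** U ** cadj (N i)) - M i ** U ** cadj (N i) + M i ** U ** cadj U ** cadj (M i)"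
      by (simp add: E_def cadj_diff cadj_mult mmult_diff_ldistrib mmult_diff_rdistrib matrix_mul_assoc algebra_simps)
    also have "\<dots> = 0" using e1[of i i] e2[of i i] R[of i i] by (simp add: cadj_mult)
    finally have "E = 0" by (rule gram_zero)
    thus ?thesis by (simp add: E_def)
  qed
  have UQ: "U ** (cadj U ** U) = U" using UU PU by (simp add: matrix_mul_assoc)
  have PI: "partial_isometry U" unfolding partial_isometry_def
  proof (intro allI impI)
    fix x assume orth: "\<forall>y. U *v y = 0 \<longrightarrow> cinner x y = 0"
    have "U *v (x - (cadj U ** U) *v x) = 0"
      using UQ by (simp add: matrix_vector_mult_diff_distrib matrix_vector_mul_assoc)
    hence "cinner x (x - (cadj U ** U) *v x) = 0" using orth by blast
    hence "cinner x x = cinner x (cadj U *v (U *v x))"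
      by (simp add: cinner_diff_right matrix_vector_mul_assoc)
    also have "\<dots> = cinner (U *v x) (U *v x)" by (simp add: cinner_adj)
    finally have "complex_of_real ((norm x)^2) = complex_of_real ((norm (U *v x))^2)"
      by (simp add: cinner_self)
    hence "(norm x)^2 = (norm (U *v x))^2" using of_real_eq_iff by blast
    thus "norm (U *v x) = norm x" by (simp add: power2_eq_iff_nonneg)
  qed
  show ?thesis using PI MU by (simp add: U_def Gp_def)
qed



theorem lemma4p2:
  fixes A :: "complex^'n^'n" and C :: "complex^'n^'m"
    and BM :: "complex^'k^'n" and BN :: "complex^'l^'n"
    and DM :: "complex^'k^'m" and DN :: "complex^'l^'m"
  assumes "stable A"
    and "\<forall>z\<in>ball 0 1. \<forall>w\<in>ball 0 1.
           transfer DM C A BM w ** cadj (transfer DM C A BM z)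
         = transfer DN C A BN w ** cadj (transfer DN C A BN z)"
  shows "partial_isometry
           (mp_inverse (cadj DM ** DM + cadj BM ** obs_gramian C A ** BM)
              ** (cadj DM ** DN + cadj BM ** obs_gramian C A ** BN))
     \<and> (\<forall>z\<in>ball 0 1. transfer DM C A BM z **
           (mp_inverse (cadj DM ** DM + cadj BM ** obs_gramian C A ** BM)
              ** (cadj DM ** DN + cadj BM ** obs_gramian C A ** BN))
         = transfer DN C A BN z)"
proof -
  let ?M = "coef DM C A BM" and ?N = "coef DN C A BN"
  let ?U = "mp_inverse (cadj DM ** DM + cadj BM ** obs_gramian C A ** BM)
              ** (cadj DM ** DN + cadj BM ** obs_gramian C A ** BN)"
  have Gs: "(\<lambda>j. cadj (?M j) ** ?M j) sums (cadj DM ** DM + cadj BM ** obs_gramian C A ** BM)"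
    by (rule gram_sums[OF assms(1)])
  have Hs: "(\<lambda>j. cadj (?M j) ** ?N j) sums (cadj DM ** DN + cadj BM ** obs_gramian C A ** BN)"
    by (rule gram_sums[OF assms(1)])
  have R: "\<And>i j. ?M i ** cadj (?M j) = ?N i ** cadj (?N j)"
    by (rule coef_identity[OF assms])
  from main_alg[OF Gs Hs R] have PI: "partial_isometry ?U" and MU: "\<And>i. ?M i ** ?U = ?N i" by auto
  have "transfer DM C A BM z ** ?U = transfer DN C A BN z" if z: "z \<in> ball 0 1" for z
  proof -
    have z1: "cmod z < 1" using z by (simp add: dist_norm)
    have "(\<lambda>j. csc (z^j) (?M j) ** ?U) sums (transfer DM C A BM z ** ?U)"
      by (rule bounded_linear.sums[OF bl_mmult1 transfer_sums[OF assms(1) z1]])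
    hence "(\<lambda>j. csc (z^j) (?N j)) sums (transfer DM C A BM z ** ?U)"
      by (simp add: csc_mult1 MU)
    moreover have "(\<lambda>j. csc (z^j) (?N j)) sums (transfer DN C A BN z)"
      by (rule transfer_sums[OF assms(1) z1])
    ultimately show ?thesis by (rule sums_unique2)
  qed
  thus ?thesis using PI by blast
qed

end
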